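(* Let $n\ge1$ and let $r_1,\ldots,r_n$ be distinct nonzero real numbers, labeled so that $r_k>0$ for $1\le k\le p$ and $r_k<0$ for $p+1\le k\le n$, where $0\le p\le n$. Let $V=V(r_1,\ldots,r_n)$ and $V_k=V(r_1,\ldots,r_{k-1},r_{k+1},\ldots,r_n)$ for $1\le k\le n$. Then $$\frac{1}{|r_1r_2\cdots r_n|}=\frac{1}{|V|}\int_0^\infty\Big(\Big|\sum_{k=1}^p(-1)^kV_ke^{-r_kx}\Big|+\Big|\sum_{k=p+1}^n(-1)^kV_ke^{r_kx}\Big|\Big)dx,$$ where an empty sum is $0$ (so for $p=n$ the right-hand side is $\frac{1}{|V|}\int_0^\infty|\sum_{k=1}^n(-1)^kV_ke^{-r_kx}|dx$, and for $p=0$ it is $\frac{1}{|V|}\int_0^\infty|\sum_{k=1}^n(-1)^kV_ke^{r_kx}|dx$).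
   Context: For numbers $x_1,\ldots,x_m$, $V(x_1,\ldots,x_m)=\det(x_j^{i-1})_{1\le i,j\le m}=\prod_{1\le i<j\le m}(x_j-x_i)$ is the Vandermonde determinant (equal to $1$ when $m\le1$). *)

theory Defs
  imports "HOL-Analysis.Analysis"
begin

text \<open>Vandermonde determinant of the list [x_1,...,x_m], given by its product formula
  prod_{1<=i<j<=m} (x_j - x_i); equal to 1 when m <= 1.\<close>
definition vandermonde :: "real list \<Rightarrow> real" where
  "vandermonde xs = (\<Prod>j<length xs. \<Prod>i<j. xs ! j - xs ! i)"

definition rlist :: "(nat \<Rightarrow> real) \<Rightarrow> nat \<Rightarrow> real list" where
  "rlist r n = map r [1..<n+1]"

definition rlist_del :: "(nat \<Rightarrow> real) \<Rightarrow> nat \<Rightarrow> nat \<Rightarrow> real list" where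
  "rlist_del r n k = map r (filter (\<lambda>i. i \<noteq> k) [1..<n+1])"

end

theory Submission
  imports Defs
begin

definition cc :: "(nat \<Rightarrow> real) \<Rightarrow> nat set \<Rightarrow> nat \<Rightarrow> real" where
  "cc r S k = 1 / (\<Prod>i\<in>S-{k}. r i - r k)"

definition Phi :: "(nat \<Rightarrow> real) \<Rightarrow> nat set \<Rightarrow> nat set \<Rightarrow> real \<Rightarrow> real" where
  "Phi r S P x = (\<Sum>k\<in>P. cc r S k * exp (- r k * x))"

definition TT :: "(nat \<Rightarrow> real) \<Rightarrow> nat set \<Rightarrow> real" where
  "TT r S = (\<Sum>k\<in>S. cc r S k)"

lemma exp_lim0: "(a::real) < 0 \<Longrightarrow> ((\<lambda>y::real. exp (a*y)) \<longlongrightarrow> 0) at_top"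
  by (rule filterlim_compose[OF exp_at_bot filterlim_tendsto_neg_mult_at_bot[OF tendsto_const _ filterlim_ident]])

lemma cc_remove:
  assumes "finite S" "inj_on r S" "j \<in> S" "k \<in> S" "k \<noteq> j"
  shows "cc r S k * (r j - r k) = cc r (S-{j}) k"
proof -
  have e: "S - {k} = insert j (S - {j} - {k})" using assms by auto
  have "r j - r k \<noteq> 0" using assms by (auto dest: inj_onD)
  then show ?thesis unfolding cc_def using assms
    by (subst e, subst prod.insert) auto
qed

lemma Phi_deriv:
  assumes "finite S" "inj_on r S" "P \<subseteq> S" "j \<in> S"
  shows "(Phi r S P has_real_derivative (Phi r (S-{j}) (P-{j}) x - r j * Phi r S P x)) (at x)"
proof -
  have d: "(Phi r S P has_real_derivative (\<Sum>k\<in>P. cc r S k * (exp (- r k * x) * (- r k)))) (at x)"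
    unfolding Phi_def
    by (auto intro!: derivative_eq_intros simp: mult_ac)
  have fP: "finite P" using assms finite_subset by blast
  have "(\<Sum>k\<in>P. cc r S k * (exp (- r k * x) * (- r k))) + r j * Phi r S P x
      = (\<Sum>k\<in>P. cc r S k * (r j - r k) * exp (- r k * x))"
    unfolding Phi_def by (simp add: sum_distrib_left sum.distrib[symmetric] algebra_simps)
  also have "\<dots> = (\<Sum>k\<in>P. if k = j then 0 else cc r (S-{j}) k * exp (- r k * x))"
    by (rule sum.cong) (use assms cc_remove in auto)
  also have "\<dots> = Phi r (S-{j}) (P-{j}) x"
    unfolding Phi_def using fP by (simp add: sum.If_cases Diff_eq)
  finally have E: "(\<Sum>k\<in>P. cc r S k * (exp (- r k * x) * (- r k))) + r j * Phi r S P x = Phi r (S-{j}) (P-{j}) x" .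
  have "Phi r (S-{j}) (P-{j}) x - r j * Phi r S P x = (\<Sum>k\<in>P. cc r S k * (exp (- r k * x) * (- r k)))"
    using E by linarith
  then show ?thesis using d by simp
qed

lemma sum_if_ne: "finite S \<Longrightarrow> (\<Sum>k\<in>S. if k \<noteq> l then g k else 0) = (sum g (S-{l}) :: real)"
  by (rule sum.mono_neutral_cong_right) auto

lemma TT_rec:
  assumes "finite S" "inj_on r S" "j \<in> S" "l \<in> S" "j \<noteq> l"
  shows "(r l - r j) * TT r S = TT r (S-{l}) - TT r (S-{j})"
proof -
  have "\<And>k. k \<in> S \<Longrightarrow> (r l - r j) * cc r S k
      = (if k \<noteq> l then cc r (S-{l}) k else 0) - (if k \<noteq> j then cc r (S-{j}) k else 0)"
  proof -
    fix k assume k: "k \<in> S"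
    show "?thesis k"
    proof (cases "k = j")
      case True then show ?thesis using cc_remove[OF assms(1,2,4) k] assms by (simp add: algebra_simps)
    next
      case F1: False
      show ?thesis
      proof (cases "k = l")
        case True then show ?thesis using cc_remove[OF assms(1,2,3) k] assms
          by (simp add: algebra_simps)
      next
        case False
        have "(r l - r j) * cc r S k = cc r S k * (r l - r k) - cc r S k * (r j - r k)"
          by (simp add: algebra_simps)
        then show ?thesis using cc_remove[OF assms(1,2,3) k] cc_remove[OF assms(1,2,4) k] F1 False by simp
      qed
    qed
  qed
  then have "(r l - r j) * TT r S = (\<Sum>k\<in>S. (if k \<noteq> l then cc r (S-{l}) k else 0) - (if k \<noteq> j then cc r (S-{j}) k else 0))"
    unfolding TT_def sum_distrib_left by (rule sum.cong[OF refl])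
  also have "\<dots> = TT r (S-{l}) - TT r (S-{j})"
    unfolding TT_def sum_subtractf using assms(1) by (simp add: sum_if_ne)
  finally show ?thesis .
qed

lemma TT_single: "TT r {l} = 1"
  unfolding TT_def cc_def by simp

lemma TT_zero:
  assumes "finite S" "inj_on r S" "card S \<ge> 2"
  shows "TT r S = 0"
  using assms
proof (induction "card S" arbitrary: S rule: less_induct)
  case less
  obtain j where j: "j \<in> S" using less.prems(3) by fastforce
  have "card (S-{j}) \<ge> 1" using less.prems j by auto
  then have "S-{j} \<noteq> {}" by (metis card.empty not_one_le_zero)
  then obtain l where l: "l \<in> S-{j}" by blast
  have jl: "j \<in> S" "l \<in> S" "j \<noteq> l" using j l by auto
  have rne: "r l - r j \<noteq> 0" using jl less.prems(2) by (auto dest: inj_onD)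
  have cS: "card (S-{j}) = card S - 1" "card (S-{l}) = card S - 1"
    using jl less.prems(1) by auto
  have "TT r (S-{l}) = TT r (S-{j})"
  proof (cases "card S = 2")
    case True
    have "S - {j} = {l}" using True jl less.prems(1) cS
      by (metis (no_types, lifting) One_nat_def card_1_singletonE diff_Suc_1 insert_Diff insert_iff numeral_2_eq_2 singletonD)
    moreover have "S - {l} = {j}" using True jl less.prems(1) cS
      by (metis (no_types, lifting) One_nat_def card_1_singletonE diff_Suc_1 insert_Diff insert_iff numeral_2_eq_2 singletonD)
    ultimately show ?thesis by (simp add: TT_single)
  next
    case False
    then have "card S \<ge> 3" using less.prems(3) by linarith
    then have "TT r (S-{l}) = 0" "TT r (S-{j}) = 0"
      using less.hyps[of "S-{l}"] less.hyps[of "S-{j}"] less.prems cS jl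
        inj_on_diff[OF less.prems(2), of "{l}"] inj_on_diff[OF less.prems(2), of "{j}"]
      by auto
    then show ?thesis by simp
  qed
  then show ?case using TT_rec[OF less.prems(1,2) jl] rne by simp
qed

lemma Phi_base:
  assumes "finite P" "inj_on r P" "x \<ge> 0"
  shows "Phi r P P x \<ge> 0"
  using assms
proof (induction P arbitrary: x rule: finite_induct)
  case empty then show ?case by (simp add: Phi_def)
next
  case (insert j P')
  let ?S = "insert j P'"
  show ?case
  proof (cases "P' = {}")
    case True then show ?thesis by (simp add: Phi_def cc_def)
  next
    case False
    have injP': "inj_on r P'" using insert.prems(1) by (auto intro: inj_on_subset)
    have "card ?S \<ge> 2" using False insert.hyps
      by (metis card_0_eq card_insert_disjoint not_less_eq_eq numeral_2_eq_2 One_nat_def Suc_le_mono le0 le_antisym not_less_eq_eq)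
    then have T0: "TT r ?S = 0" using TT_zero insert.hyps insert.prems by blast
    have P0: "Phi r ?S ?S 0 = 0" using T0 unfolding TT_def Phi_def by simp
    define g where "g y = exp (r j * y) * Phi r ?S ?S y" for y
    have dg: "(g has_real_derivative exp (r j * y) * Phi r P' P' y) (at y)" for y
    proof -
      have d: "(Phi r ?S ?S has_real_derivative (Phi r (?S-{j}) (?S-{j}) y - r j * Phi r ?S ?S y)) (at y)"
        by (rule Phi_deriv) (use insert in auto)
      have e: "?S - {j} = P'" using insert.hyps by auto
      show ?thesis unfolding g_def
        by (rule derivative_eq_intros d refl | simp add: e)+ (simp add: algebra_simps)
    qed
    have "g 0 \<le> g x"
      by (rule deriv_nonneg_imp_mono[OF dg]) (use insert.IH[OF injP'] insert.prems in auto)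
    then have "0 \<le> exp (r j * x) * Phi r ?S ?S x" using P0 by (simp add: g_def)
    then show ?thesis by (simp add: zero_le_mult_iff)
  qed
qed

lemma Phi_sign:
  assumes "finite N" "finite P" "P \<inter> N = {}" "inj_on r (P \<union> N)"
    "\<forall>k\<in>P. r k > 0" "\<forall>k\<in>N. r k < 0" "x \<ge> 0"
  shows "(-1) ^ card N * Phi r (P \<union> N) P x \<ge> 0"
  using assms
proof (induction N arbitrary: x rule: finite_induct)
  case empty then show ?case using Phi_base by simp
next
  case (insert m N')
  let ?S = "P \<union> insert m N'"
  have inj': "inj_on r (P \<union> N')" using insert.prems by (auto intro: inj_on_subset)
  have IH: "\<And>y. y \<ge> 0 \<Longrightarrow> (-1) ^ card N' * Phi r (P \<union> N') P y \<ge> 0"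
    using insert.IH inj' insert.prems by auto
  have mP: "m \<notin> P" using insert.prems by auto
  have rm: "r m < 0" using insert.prems by auto
  define h where "h y = (-1) ^ card N' * (exp (r m * y) * Phi r ?S P y)" for y
  have dh: "(h has_real_derivative (-1) ^ card N' * (exp (r m * y) * Phi r (P \<union> N') P y)) (at y)" for y
  proof -
    have d: "(Phi r ?S P has_real_derivative (Phi r (?S-{m}) (P-{m}) y - r m * Phi r ?S P y)) (at y)"
      by (rule Phi_deriv) (use insert in auto)
    have e: "?S - {m} = P \<union> N'" "P - {m} = P" "P \<union> N' - {m} = P \<union> N'" using insert.hyps mP by auto
    show ?thesis unfolding h_def
      by (rule derivative_eq_intros d refl | simp add: e)+ (simp add: algebra_simps)
  qed
  have pos: "0 \<le> (-1) ^ card N' * (exp (r m * z) * Phi r (P \<union> N') P z)" if "z \<ge> 0" for z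
  proof -
    have "(-1) ^ card N' * (exp (r m * z) * Phi r (P \<union> N') P z) = exp (r m * z) * ((-1) ^ card N' * Phi r (P \<union> N') P z)"
      by (simp only: mult.left_commute)
    then show ?thesis using IH[OF that] by (metis exp_ge_zero mult_nonneg_nonneg)
  qed
  have mono: "h x \<le> h y" if "y \<ge> x" for y
    by (rule deriv_nonneg_imp_mono[OF dh]) (use pos insert.prems that in auto)
  have lim: "(h \<longlongrightarrow> 0) at_top"
  proof -
    have "h = (\<lambda>y. (-1) ^ card N' * (\<Sum>k\<in>P. cc r ?S k * exp ((r m - r k) * y)))"
      unfolding h_def Phi_def
      by (auto simp: sum_distrib_left exp_add[symmetric] algebra_simps intro!: sum.cong)
    moreover have "((\<lambda>y. (\<Sum>k\<in>P. cc r ?S k * exp ((r m - r k) * y))) \<longlongrightarrow> 0) at_top"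
      by (rule tendsto_null_sum, rule tendsto_mult_right_zero, rule exp_lim0)
        (use insert.prems rm in auto)
    ultimately show ?thesis by (auto intro: tendsto_mult_right_zero)
  qed
  have "h x \<le> 0"
    by (rule tendsto_lowerbound[OF lim]) (auto simp: eventually_at_top_linorder intro!: exI[of _ x] mono)
  then have "0 \<le> (-1) ^ card (insert m N') * exp (r m * x) * Phi r ?S P x"
    using insert.hyps by (simp add: h_def)
  then show ?case by (simp add: zero_le_mult_iff mult.commute[of _ "exp _"] mult.assoc)
qed

definition W :: "(nat \<Rightarrow> real) \<Rightarrow> nat set \<Rightarrow> real" where
  "W r A = (\<Prod>j\<in>A. \<Prod>i\<in>{i\<in>A. i<j}. r j - r i)"

lemma W_insert:
  assumes "finite A" "\<forall>i\<in>A. i < x"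
  shows "W r (insert x A) = (\<Prod>i\<in>A. r x - r i) * W r A"
proof -
  have xA: "x \<notin> A" using assms by auto
  have e1: "{i \<in> insert x A. i < x} = A" using assms by auto
  have e2: "\<And>j. j \<in> A \<Longrightarrow> {i \<in> insert x A. i < j} = {i\<in>A. i<j}" using assms by auto
  have "W r (insert x A) = (\<Prod>i\<in>{i \<in> insert x A. i < x}. r x - r i) * (\<Prod>j\<in>A. \<Prod>i\<in>{i \<in> insert x A. i < j}. r j - r i)"
    unfolding W_def by (rule prod.insert[OF assms(1) xA])
  also have "\<dots> = (\<Prod>i\<in>A. r x - r i) * W r A"
    unfolding W_def e1 by (intro arg_cong2[where f=times] refl prod.cong) (use assms in auto)
  finally show ?thesis .
qed

lemma vand_snoc: "vandermonde (map r xs @ [r x]) = vandermonde (map r xs) * (\<Prod>i<length xs. r x - r (xs ! i))"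
proof -
  let ?ys = "map r xs @ [r x]"
  have "vandermonde ?ys = (\<Prod>j<length xs. \<Prod>i<j. ?ys ! j - ?ys ! i) * (\<Prod>i<length xs. ?ys ! length xs - ?ys ! i)"
    unfolding vandermonde_def by (simp add: prod.lessThan_Suc)
  also have "(\<Prod>j<length xs. \<Prod>i<j. ?ys ! j - ?ys ! i) = vandermonde (map r xs)"
    unfolding vandermonde_def by (auto simp: nth_append intro!: prod.cong)
  also have "(\<Prod>i<length xs. ?ys ! length xs - ?ys ! i) = (\<Prod>i<length xs. r x - r (xs ! i))"
    by (auto simp: nth_append intro!: prod.cong)
  finally show ?thesis .
qed

lemma vand_W: "sorted_wrt (<) L \<Longrightarrow> vandermonde (map r L) = W r (set L)"
proof (induction L rule: rev_induct)
  case Nil then show ?case by (simp add: vandermonde_def W_def)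
next
  case (snoc x xs)
  have s: "sorted_wrt (<) xs" "\<forall>i\<in>set xs. i < x" using snoc.prems by (auto simp: sorted_wrt_append)
  have d: "distinct xs" using s(1) by (metis strict_sorted_iff sorted_wrt_iff_nth_less)
  have "(\<Prod>i<length xs. r x - r (xs ! i)) = (\<Prod>i\<in>set xs. r x - r i)"
    using prod.reindex_bij_betw[OF bij_betw_nth[OF d refl refl], of "\<lambda>i. r x - r i"] by simp
  then show ?case using snoc.IH[OF s(1)] W_insert[of "set xs" x r] s
    by (simp add: vand_snoc)
qed

lemma W_remove:
  assumes "finite A" "k \<in> A"
  shows "W r A = (-1) ^ card {i\<in>A. i<k} * (\<Prod>i\<in>A-{k}. r i - r k) * W r (A-{k})"
proof -
  have inner: "(\<Prod>i\<in>{i\<in>A. i<j}. r j - r i) = (if k < j then r j - r k else 1) * (\<Prod>i\<in>{i\<in>A-{k}. i<j}. r j - r i)"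
    if "j \<in> A - {k}" for j
  proof (cases "k < j")
    case True
    have "{i\<in>A. i<j} = insert k {i\<in>A-{k}. i<j}" using True assms by auto
    then show ?thesis using True assms by simp
  next
    case False
    have "{i\<in>A. i<j} = {i\<in>A-{k}. i<j}" using False by auto
    then show ?thesis using False by simp
  qed
  have "W r A = (\<Prod>i\<in>{i\<in>A. i<k}. r k - r i) * (\<Prod>j\<in>A-{k}. \<Prod>i\<in>{i\<in>A. i<j}. r j - r i)"
    unfolding W_def using assms by (simp add: prod.remove)
  also have "(\<Prod>j\<in>A-{k}. \<Prod>i\<in>{i\<in>A. i<j}. r j - r i) = (\<Prod>j\<in>A-{k}. if k < j then r j - r k else 1) * W r (A-{k})"
    unfolding W_def prod.distrib[symmetric] by (rule prod.cong[OF refl]) (rule inner)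
  also have "(\<Prod>j\<in>A-{k}. if k < j then r j - r k else 1) = (\<Prod>j\<in>{j\<in>A. k<j}. r j - r k)"
    using assms by (intro prod.mono_neutral_cong_right) auto
  also have "(\<Prod>i\<in>{i\<in>A. i<k}. r k - r i) = (-1) ^ card {i\<in>A. i<k} * (\<Prod>i\<in>{i\<in>A. i<k}. r i - r k)"
    using prod_uminus[of "\<lambda>i. r i - r k" "{i\<in>A. i<k}"] by simp
  also have "(\<Prod>i\<in>A-{k}. r i - r k) = (\<Prod>i\<in>{i\<in>A. i<k}. r i - r k) * (\<Prod>j\<in>{j\<in>A. k<j}. r j - r k)"
  proof -
    have "A - {k} = {i\<in>A. i<k} \<union> {j\<in>A. k<j}" by auto
    then show ?thesis using assms by (simp add: prod.union_disjoint[symmetric] disjoint_iff)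
  qed
  ultimately show ?thesis by (simp add: mult_ac)
qed

lemma W_nonzero: "finite A \<Longrightarrow> inj_on r A \<Longrightarrow> W r A \<noteq> 0"
  unfolding W_def by (subst prod_zero_iff) (auto simp: prod_zero_iff dest: inj_onD)

lemma cc_neg: "finite S \<Longrightarrow> k \<in> S \<Longrightarrow> cc (\<lambda>i. - r i) S k = (-1) ^ (card S - 1) * cc r S k"
proof -
  assume a: "finite S" "k \<in> S"
  have "(\<Prod>i\<in>S-{k}. - r i - - r k) = (-1) ^ (card S - 1) * (\<Prod>i\<in>S-{k}. r i - r k)"
    using prod_uminus[of "\<lambda>i. r i - r k" "S-{k}"] a by simp
  then show ?thesis unfolding cc_def by (simp add: power_one_over[symmetric] divide_simps)
qed

lemma sum_cc_div:
  assumes "finite S" "inj_on r S" "0 \<notin> S" "\<forall>k\<in>S. r k \<noteq> 0" "S \<noteq> {}"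
  shows "(\<Sum>k\<in>S. cc r S k / r k) = 1 / (\<Prod>k\<in>S. r k)"
proof -
  let ?r = "r(0 := 0)"
  have inj: "inj_on ?r (insert 0 S)" using assms
    by (auto simp: inj_on_def split: if_splits)
  have c: "card (insert 0 S) \<ge> 2" using assms
    by (metis One_nat_def Suc_1 Suc_le_eq card_gt_0_iff card_insert_disjoint finite_insert not_less_eq_eq)
  have "TT ?r (insert 0 S) = 0" using TT_zero[OF _ inj c] assms by simp
  moreover have "TT ?r (insert 0 S) = cc ?r (insert 0 S) 0 + (\<Sum>k\<in>S. cc ?r (insert 0 S) k)"
    unfolding TT_def using assms by simp
  moreover have "cc ?r (insert 0 S) 0 = 1 / (\<Prod>k\<in>S. r k)"
  proof -
    have "(\<Prod>i\<in>insert 0 S - {0}. ?r i - ?r 0) = (\<Prod>k\<in>S. r k)"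
      using assms by (intro prod.cong) auto
    then show ?thesis unfolding cc_def by simp
  qed
  moreover have "cc ?r (insert 0 S) k = - (cc r S k / r k)" if k: "k \<in> S" for k
  proof -
    have k0: "k \<noteq> 0" using k assms by auto
    have e: "insert 0 S - {k} = insert 0 (S - {k})" using k0 by auto
    have "(\<Prod>i\<in>insert 0 S - {k}. ?r i - ?r k) = (0 - r k) * (\<Prod>i\<in>S-{k}. r i - r k)"
      unfolding e using assms k0 by (subst prod.insert) (auto intro!: prod.cong split: if_splits)
    then show ?thesis unfolding cc_def by simp
  qed
  ultimately have "1 / (\<Prod>k\<in>S. r k) - (\<Sum>k\<in>S. cc r S k / r k) = 0"
    by (simp add: sum_negf)
  then show ?thesis by simp
qed

theorem proposition1:
  fixes n p :: nat and r :: "nat \<Rightarrow> real"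
  assumes "n \<ge> 1" and "p \<le> n"
    and "inj_on r {1..n}"
    and "\<And>k. 1 \<le> k \<Longrightarrow> k \<le> p \<Longrightarrow> r k > 0"
    and "\<And>k. p + 1 \<le> k \<Longrightarrow> k \<le> n \<Longrightarrow> r k < 0"
  defines "V \<equiv> vandermonde (rlist r n)"
    and "f \<equiv> \<lambda>x::real. \<bar>\<Sum>k=1..p. (-1) ^ k * vandermonde (rlist_del r n k) * exp (- r k * x)\<bar>
                    + \<bar>\<Sum>k=p+1..n. (-1) ^ k * vandermonde (rlist_del r n k) * exp (r k * x)\<bar>"
  shows "f integrable_on {0..}
     \<and> 1 / \<bar>\<Prod>k=1..n. r k\<bar> = (1 / \<bar>V\<bar>) * integral {0..} f"
proof -
  define S where "S = {1..n}"
  define P0 where "P0 = {1..p}"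
  define N0 where "N0 = {p+1..n}"
  define \<sigma> :: real where "\<sigma> = (-1) ^ (n - p)"
  define Psi where "Psi x = (\<Sum>k\<in>N0. cc r S k * exp (r k * x))" for x
  have fS: "finite S" and SU: "S = P0 \<union> N0" and disj: "P0 \<inter> N0 = {}"
    using assms(2) by (auto simp: S_def P0_def N0_def)
  have cN: "card N0 = n - p" and cP: "card P0 = p" and cS: "card S = n"
    by (simp_all add: S_def P0_def N0_def)
  have injS: "inj_on r S" using assms(3) by (simp add: S_def)
  have posP: "\<forall>k\<in>P0. r k > 0" using assms(4) by (auto simp: P0_def)
  have negN: "\<forall>k\<in>N0. r k < 0" using assms(5) by (auto simp: N0_def)
  have nz: "\<forall>k\<in>S. r k \<noteq> 0" using posP negN SU by fastforce
  have \<sigma>sq: "\<sigma> * \<sigma> = 1" by (simp add: \<sigma>_def power_mult_distrib[symmetric])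
  have VW: "V = W r S"
  proof -
    have s: "sorted_wrt (<) [1..<n+1]" by (rule sorted_wrt_upt)
    have "set [1..<n+1] = S" unfolding S_def by auto
    then show ?thesis unfolding V_def rlist_def using vand_W[OF s, of r] by simp
  qed
  have VkW: "vandermonde (rlist_del r n k) = W r (S - {k})" for k
  proof -
    have s: "sorted_wrt (<) (filter (\<lambda>i. i \<noteq> k) [1..<n+1])"
      by (rule sorted_wrt_filter) (rule sorted_wrt_upt)
    have "set (filter (\<lambda>i. i \<noteq> k) [1..<n+1]) = S - {k}" by (auto simp: S_def)
    then show ?thesis unfolding rlist_del_def using vand_W[OF s, of r] by simp
  qed
  have Vnz: "V \<noteq> 0" using VW W_nonzero fS injS by simp
  have coef: "(-1) ^ k * vandermonde (rlist_del r n k) = - V * cc r S k" if k: "k \<in> S" for k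
  proof -
    have ck: "card {i\<in>S. i<k} = k - 1"
    proof -
      have "{i\<in>S. i<k} = {1..<k}" using k by (auto simp: S_def)
      then show ?thesis by simp
    qed
    have pn: "(\<Prod>i\<in>S-{k}. r i - r k) \<noteq> 0"
      using injS fS k by (auto simp: prod_zero_iff dest: inj_onD)
    have k1: "k \<ge> 1" using k by (simp add: S_def)
    have m: "(-1::real) ^ k = - ((-1) ^ (k - 1))"
      using k1 by (metis (no_types) Suc_diff_1 less_le_trans mult_minus1 power_Suc zero_less_one)
    show ?thesis
      unfolding VkW VW W_remove[OF fS k, of r] ck cc_def m
      using pn by (simp add: field_simps)
  qed
  have f_eq: "f x = \<bar>V\<bar> * (\<bar>Phi r S P0 x\<bar> + \<bar>Psi x\<bar>)" for x
  proof -
    have "(\<Sum>k=1..p. (-1) ^ k * vandermonde (rlist_del r n k) * exp (- r k * x)) = - V * Phi r S P0 x"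
      unfolding Phi_def sum_distrib_left P0_def[symmetric]
      by (rule sum.cong) (use coef SU in auto)
    moreover have "(\<Sum>k=p+1..n. (-1) ^ k * vandermonde (rlist_del r n k) * exp (r k * x)) = - V * Psi x"
      unfolding Psi_def sum_distrib_left N0_def[symmetric]
      by (rule sum.cong) (use coef SU in auto)
    ultimately show ?thesis unfolding f_def by (simp add: abs_mult distrib_left)
  qed
  have sP: "\<sigma> * Phi r S P0 x \<ge> 0" if "x \<ge> 0" for x
    using Phi_sign[of N0 P0 r x] fS SU disj injS posP negN that cN by (simp add: \<sigma>_def)
  have sN: "\<sigma> * Psi x \<le> 0" if "x \<ge> 0" for x
  proof -
    have "(-1) ^ card P0 * Phi (\<lambda>i. - r i) (N0 \<union> P0) N0 x \<ge> 0"
      using Phi_sign[of P0 N0 "\<lambda>i. - r i" x] fS SU disj injS posP negN that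
      by (auto simp: inj_on_def Un_commute Int_commute)
    moreover have "Phi (\<lambda>i. - r i) (N0 \<union> P0) N0 x = (-1) ^ (n - 1) * Psi x"
      unfolding Phi_def Psi_def sum_distrib_left
      using cc_neg[OF fS, of _ r] SU cS by (intro sum.cong) (auto simp: Un_commute)
    moreover have "(-1::real) ^ p * (-1) ^ (n - 1) = - \<sigma>"
    proof -
      have "(-1::real) ^ p * (-1) ^ (n - 1) = (-1) ^ (p + (n - 1))" by (simp add: power_add)
      also have "p + (n - 1) = (n - p) + 2 * p - 1" using assms(1,2) by simp
      also have "(-1::real) ^ ((n - p) + 2 * p - 1) = - \<sigma>"
      proof (cases "n - p")
        case 0
        then have "p \<ge> 1" "n - p + 2 * p - 1 = Suc (2 * (p - 1))" using assms(1,2) by auto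
        then show ?thesis using 0 by (simp add: \<sigma>_def power_mult)
      next
        case (Suc m)
        then have "n - p + 2 * p - 1 = m + 2 * p" by simp
        then show ?thesis using Suc by (simp add: \<sigma>_def power_add power_mult)
      qed
      finally show ?thesis .
    qed
    ultimately show ?thesis using cP by (simp add: mult.assoc[symmetric])
  qed
  have f_lin: "f x = \<bar>V\<bar> * \<sigma> * (Phi r S P0 x - Psi x)" if "x \<in> {0..}" for x
  proof -
    have x: "x \<ge> 0" using that by simp
    have "\<sigma> = 1 \<or> \<sigma> = -1" unfolding \<sigma>_def by (cases "even (n - p)") auto
    then have "\<bar>Phi r S P0 x\<bar> = \<sigma> * Phi r S P0 x \<and> \<bar>Psi x\<bar> = - (\<sigma> * Psi x)"
      using sP[OF x] sN[OF x] by auto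
    then have "\<bar>Phi r S P0 x\<bar> = \<sigma> * Phi r S P0 x" "\<bar>Psi x\<bar> = - (\<sigma> * Psi x)" by auto
    then show ?thesis unfolding f_eq by (simp add: algebra_simps)
  qed
  have iP: "(Phi r S P0 has_integral (\<Sum>k\<in>P0. cc r S k / r k)) {0..}"
  proof -
    have "((\<lambda>x. \<Sum>k\<in>P0. cc r S k * exp (- r k * x)) has_integral (\<Sum>k\<in>P0. cc r S k * (1 / r k))) {0..}"
    proof (rule has_integral_sum)
      fix k assume "k \<in> P0"
      then have "r k > 0" using posP by auto
      then show "((\<lambda>x. cc r S k * exp (- r k * x)) has_integral cc r S k * (1 / r k)) {0..}"
        using has_integral_exp_minus_to_infinity[of "r k" 0] by (intro has_integral_mult_right) simp
    qed (simp add: P0_def)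
    then show ?thesis unfolding Phi_def[abs_def] by simp
  qed
  have iN: "(Psi has_integral (\<Sum>k\<in>N0. cc r S k * (1 / - r k))) {0..}"
    unfolding Psi_def[abs_def]
  proof (rule has_integral_sum)
    fix k assume "k \<in> N0"
    then have "- r k > 0" using negN by auto
    then show "((\<lambda>x. cc r S k * exp (r k * x)) has_integral cc r S k * (1 / - r k)) {0..}"
      using has_integral_exp_minus_to_infinity[of "- r k" 0] by (intro has_integral_mult_right) simp
  qed (simp add: N0_def)
  have tot: "(\<Sum>k\<in>P0. cc r S k / r k) - (\<Sum>k\<in>N0. cc r S k * (1 / - r k)) = 1 / (\<Prod>k\<in>S. r k)"
  proof -
    have "(\<Sum>k\<in>P0. cc r S k / r k) - (\<Sum>k\<in>N0. cc r S k * (1 / - r k)) = (\<Sum>k\<in>S. cc r S k / r k)"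
      unfolding SU using disj fS SU by (simp add: sum.union_disjoint sum_negf)
    also have "\<dots> = 1 / (\<Prod>k\<in>S. r k)"
      using sum_cc_div[OF fS injS _ nz] assms(1) by (auto simp: S_def)
    finally show ?thesis .
  qed
  have prodsign: "1 / \<bar>\<Prod>k\<in>S. r k\<bar> = \<sigma> * (1 / (\<Prod>k\<in>S. r k))"
  proof -
    have "(\<Prod>k\<in>N0. r k) = \<sigma> * (\<Prod>k\<in>N0. - r k)"
      using prod_uminus[of "\<lambda>k. - r k" N0] cN by (simp add: \<sigma>_def)
    moreover have "(\<Prod>k\<in>N0. - r k) > 0" using negN by (intro prod_pos) auto
    moreover have "(\<Prod>k\<in>P0. r k) > 0" using posP by (intro prod_pos) auto
    moreover have "(\<Prod>k\<in>S. r k) = (\<Prod>k\<in>P0. r k) * (\<Prod>k\<in>N0. r k)"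
      unfolding SU using disj fS SU by (simp add: prod.union_disjoint)
    moreover have "\<bar>\<sigma>\<bar> = 1" by (simp add: \<sigma>_def)
    ultimately show ?thesis using \<sigma>sq
      by (auto simp: abs_mult field_simps)
  qed
  have iF: "(f has_integral \<bar>V\<bar> * \<sigma> * (1 / (\<Prod>k\<in>S. r k))) {0..}"
    using has_integral_mult_right[OF has_integral_diff[OF iP iN], of "\<bar>V\<bar> * \<sigma>"] tot f_lin
    by (subst has_integral_cong[of _ f]) auto
  show ?thesis
  proof
    show "f integrable_on {0..}" using iF by blast
    have "integral {0..} f = \<bar>V\<bar> * \<sigma> * (1 / (\<Prod>k\<in>S. r k))" using iF by (rule integral_unique)
    then show "1 / \<bar>\<Prod>k=1..n. r k\<bar> = (1 / \<bar>V\<bar>) * integral {0..} f"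
      using prodsign Vnz by (simp add: S_def)
  qed
qed

end
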